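(* Let $e\ge4$, let $a_2,\dots,a_{e-1}$ be integers, and let $\triangle_{2,e-1}$ be a sparse coloured triangle with associated numbers $\alpha_\varepsilon,k_\varepsilon$ ($2\le\varepsilon\le e-1$). Define Laurent monomials $p_{\delta,\varepsilon}\in\mathbb Z[z_2^{\pm1},\dots,z_{e-1}^{\pm1}]$ for $2\le\delta\le\varepsilon\le e-1$ recursively in $\varepsilon-\delta$ by $p_{\varepsilon,\varepsilon}=z_\varepsilon^{a_\varepsilon}$ and, for $\delta<\varepsilon$, $$p_{\delta,\varepsilon}=\frac{p_{\delta,\varepsilon-1}\,p_{\delta+1,\varepsilon}}{z_\delta z_\varepsilon}\ \text{ if the dot }(\delta,\varepsilon)\text{ of the extended triangle is black},\qquad p_{\delta,\varepsilon}=\frac{p_{\delta,\varepsilon-1}\,p_{\delta+1,\varepsilon}}{p_{\delta+1,\varepsilon-1}}\ \text{ otherwise}$$ (the dots $(\delta,\delta+1)$ being always black). Then $$p_{2,e-1}=\prod_{\beta=2}^{e-1}\bigl(z_\beta^{\,a_\beta-k_\beta}\bigr)^{\alpha_\beta}.$$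
   Context: Dots are pairs of integers $(\alpha,\beta)$. The triangle $\triangle_{\delta,\varepsilon}$ is the set of dots $(\alpha,\beta)$ with $\delta\le\alpha$, $\beta\le\varepsilon$, $\beta-\alpha\ge2$; sub-triangles $\triangle_{\alpha,\beta}$ are defined by the same rule. A coloured triangle $\triangle_{\delta,\varepsilon}$ is sparse if for every dot $(\alpha,\beta)\in\triangle_{\delta,\varepsilon}$ (including the vertex) the number of black dots in $\triangle_{\alpha,\beta}$ is at most $\beta-\alpha-1$, with equality iff $(\alpha,\beta)$ is black. The extended triangle $\underline\triangle_{2,e-1}$ consists of $\triangle_{2,e-1}$ together with the base-line dots $(\varepsilon-1,\varepsilon)$, $3\le\varepsilon\le e-1$, which are all coloured black. The line $l_\varepsilon$ is the set of dots having $\varepsilon$ as a coordinate. Weights: for a black dot $(\delta,\varepsilon)$ of $\triangle_{2,e-1}$, $w_{\delta,\varepsilon}=1+\sum w_{\alpha,\beta}$, the sum over black dots $(\alpha,\beta)$ of $\triangle_{2,e-1}$ with $\alpha<\delta$ and $\beta>\varepsilon$ (this defines the weights recursively from the top). For $2\le\varepsilon\le e-1$, $\alpha_\varepsilon=1+\sum w_{\alpha,\beta}$, the sum over black dots with $\alpha<\varepsilon<\beta$ (so $\alpha_2=\alpha_{e-1}=1$). Let $n_\varepsilon$ be the number of black dots on $l_\varepsilon$ in the extended triangle $\underline\triangle_{2,e-1}$; then $k_\varepsilon=n_\varepsilon$ if $\alpha_\varepsilon=1$ and $k_\varepsilon=n_\varepsilon-1$ otherwise. *)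

theory Defs
  imports Main
begin

text \<open>Dots are pairs of naturals (all dots occurring have coordinates between 2 and e-1).
  A colouring of the triangle is given by its set of black dots.\<close>

definition tri :: "nat \<Rightarrow> nat \<Rightarrow> (nat \<times> nat) set" where
  "tri d e = {(a, b). d \<le> a \<and> b \<le> e \<and> a + 2 \<le> b}"

definition sparse :: "nat \<Rightarrow> nat \<Rightarrow> (nat \<times> nat) set \<Rightarrow> bool" where
  "sparse d e B \<longleftrightarrow> B \<subseteq> tri d e \<and>
     (\<forall>(a, b) \<in> tri d e.
        card (B \<inter> tri a b) \<le> b - a - 1 \<and>
        (card (B \<inter> tri a b) = b - a - 1 \<longleftrightarrow> (a, b) \<in> B))"

definition ext_black :: "nat \<Rightarrow> (nat \<times> nat) set \<Rightarrow> (nat \<times> nat) set" where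
  "ext_black e B = B \<union> {(eps - 1, eps) | eps. 3 \<le> eps \<and> eps \<le> e - 1}"

function wt :: "nat \<Rightarrow> (nat \<times> nat) set \<Rightarrow> nat \<Rightarrow> nat \<Rightarrow> nat" where
  "wt e B d eps = 1 + (\<Sum>p \<in> {p \<in> B \<inter> tri 2 (e - 1). fst p < d \<and> snd p > eps}.
                          wt e B (fst p) (snd p))"
  by pat_completeness auto
termination
  by (relation "measure (\<lambda>(e, B, d, eps). d)") auto

definition alph :: "nat \<Rightarrow> (nat \<times> nat) set \<Rightarrow> nat \<Rightarrow> nat" where
  "alph e B eps = 1 + (\<Sum>p \<in> {p \<in> B \<inter> tri 2 (e - 1). fst p < eps \<and> eps < snd p}.
                          wt e B (fst p) (snd p))"

definition nline :: "nat \<Rightarrow> (nat \<times> nat) set \<Rightarrow> nat \<Rightarrow> nat" where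
  "nline e B eps = card {p \<in> ext_black e B. fst p = eps \<or> snd p = eps}"

definition kk :: "nat \<Rightarrow> (nat \<times> nat) set \<Rightarrow> nat \<Rightarrow> nat" where
  "kk e B eps = (if alph e B eps = 1 then nline e B eps else nline e B eps - 1)"

text \<open>Monic Laurent monomials in z_2, ..., z_(e-1) are represented by their exponent
  vectors (nat \<Rightarrow> int); multiplication of monomials is addition of exponent vectors
  and division is subtraction. \<open>zpow i m\<close> is z_i^m.\<close>
definition zpow :: "nat \<Rightarrow> int \<Rightarrow> (nat \<Rightarrow> int)" where
  "zpow i m = (\<lambda>j. if j = i then m else 0)"

function pm :: "nat \<Rightarrow> (nat \<times> nat) set \<Rightarrow> (nat \<Rightarrow> int) \<Rightarrow> nat \<Rightarrow> nat \<Rightarrow> (nat \<Rightarrow> int)" where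
  "pm e B a d eps =
     (if eps \<le> d then zpow eps (a eps)
      else if (d, eps) \<in> ext_black e B \<or> eps = d + 1 then
        (\<lambda>j. pm e B a d (eps - 1) j + pm e B a (d + 1) eps j - zpow d 1 j - zpow eps 1 j)
      else
        (\<lambda>j. pm e B a d (eps - 1) j + pm e B a (d + 1) eps j - pm e B a (d + 1) (eps - 1) j))"
  by pat_completeness auto
termination
  by (relation "measure (\<lambda>(e, B, a, d, eps). eps - d)") auto

end

theory Submission imports Defs begin

function wtr :: "(nat \<times> nat) set \<Rightarrow> nat \<Rightarrow> nat \<Rightarrow> nat \<Rightarrow> nat \<Rightarrow> nat" where
  "wtr B d e x y = 1 + (\<Sum>p \<in> {p \<in> B \<inter> tri d e. fst p < x \<and> snd p > y}. wtr B d e (fst p) (snd p))"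
  by pat_completeness auto
termination
  by (relation "measure (\<lambda>(B, d, e, x, y). x)") auto

declare wtr.simps[simp del] pm.simps[simp del] wt.simps[simp del]

lemma finite_tri[simp]: "finite (tri d e)"
proof -
  have "tri d e \<subseteq> {0..e} \<times> {0..e}" by (auto simp: tri_def)
  thus ?thesis by (rule finite_subset) auto
qed

lemma wtr_out: "x \<le> d \<or> e \<le> y \<Longrightarrow> wtr B d e x y = 1"
proof -
  assume h: "x \<le> d \<or> e \<le> y"
  have E: "{p \<in> B \<inter> tri d e. fst p < x \<and> snd p > y} = {}"
    using h by (auto simp: tri_def)
  then show ?thesis by (subst wtr.simps, subst E) simp
qed

lemma sum_split_const:
  assumes "finite A" "A' \<subseteq> A" "\<And>p. p \<in> A - A' \<Longrightarrow> f p = g p"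
  shows "sum f A = sum f A' + sum g (A - A')"
proof -
  have "sum f A = sum f (A - A') + sum f A'" using sum.subset_diff[OF assms(2,1)] .
  moreover have "sum f (A - A') = sum g (A - A')" using assms(3) by (rule sum.cong[OF refl])
  ultimately show ?thesis by (simp add: add.commute)
qed

lemma wtr_IE:
  assumes de: "d < e"
  shows "int (wtr B d e x y) = int (wtr B d (e-1) x y) + int (wtr B (d+1) e x y)
     - int (wtr B (d+1) (e-1) x y)
     + (if (d,e) \<in> B \<and> d+2 \<le> e \<and> d < x \<and> y < e then int (wtr B (d+1) (e-1) x y) else 0)"
proof (induction x arbitrary: y rule: less_induct)
  case (less x)
  define bl where "bl = ((d,e) \<in> B \<and> d+2 \<le> e)"
  define U where "U = {p \<in> B \<inter> tri d e. fst p < x \<and> snd p > y}"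
  define U1 where "U1 = {p \<in> B \<inter> tri d (e-1). fst p < x \<and> snd p > y}"
  define U2 where "U2 = {p \<in> B \<inter> tri (d+1) e. fst p < x \<and> snd p > y}"
  define U3 where "U3 = {p \<in> B \<inter> tri (d+1) (e-1). fst p < x \<and> snd p > y}"
  define f where "f = (\<lambda>p. int (wtr B d e (fst p) (snd p)))"
  define f1 where "f1 = (\<lambda>p. int (wtr B d (e-1) (fst p) (snd p)))"
  define f2 where "f2 = (\<lambda>p. int (wtr B (d+1) e (fst p) (snd p)))"
  define f3 where "f3 = (\<lambda>p. int (wtr B (d+1) (e-1) (fst p) (snd p)))"
  define T where "T = (\<lambda>p. if bl \<and> d < fst p \<and> snd p < e then f3 p else 0)"
  have finU: "finite U" unfolding U_def by (rule finite_subset[of _ "tri d e"]) auto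
  have U1s: "U1 \<subseteq> U" unfolding U1_def U_def tri_def by auto
  have U2s: "U2 \<subseteq> U" unfolding U2_def U_def tri_def by auto
  have U3e: "U3 = U1 \<inter> U2" unfolding U1_def U2_def U3_def tri_def by auto
  have Urest: "U - (U1 \<union> U2) = (if bl \<and> d < x \<and> y < e then {(d,e)} else {})"
    unfolding U_def U1_def U2_def bl_def tri_def using de
    by auto (metis Suc_le_D Suc_pred le_antisym not_less_eq_eq zero_less_Suc)
  have fsplit: "f p = f1 p + f2 p - f3 p + T p" if "p \<in> U" for p
    using less.IH[of "fst p" "snd p"] that unfolding U_def f_def f1_def f2_def f3_def T_def bl_def
    by auto
  have S: "sum f U = sum f1 U + sum f2 U - sum f3 U + sum T U"
    using fsplit by (simp add: sum.distrib sum_subtractf)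
  have S1: "sum f1 U = sum f1 U1 + int (card (U - U1))"
  proof -
    have "sum f1 U = sum f1 U1 + sum (\<lambda>_. 1) (U - U1)"
    proof (rule sum_split_const[OF finU U1s])
      fix p assume "p \<in> U - U1"
      hence "e - 1 \<le> snd p" unfolding U_def U1_def tri_def by auto
      thus "f1 p = 1" unfolding f1_def by (simp add: wtr_out)
    qed
    thus ?thesis by simp
  qed
  have S2: "sum f2 U = sum f2 U2 + int (card (U - U2))"
  proof -
    have "sum f2 U = sum f2 U2 + sum (\<lambda>_. 1) (U - U2)"
    proof (rule sum_split_const[OF finU U2s])
      fix p assume "p \<in> U - U2"
      hence "fst p \<le> d + 1" unfolding U_def U2_def tri_def by auto
      thus "f2 p = 1" unfolding f2_def by (simp add: wtr_out)
    qed
    thus ?thesis by simp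
  qed
  have U3s: "U3 \<subseteq> U" using U3e U1s by auto
  have S3: "sum f3 U = sum f3 U3 + int (card (U - U3))"
  proof -
    have "sum f3 U = sum f3 U3 + sum (\<lambda>_. 1) (U - U3)"
    proof (rule sum_split_const[OF finU U3s])
      fix p assume "p \<in> U - U3"
      hence "fst p \<le> d + 1 \<or> e - 1 \<le> snd p" unfolding U_def U3_def tri_def by auto
      thus "f3 p = 1" unfolding f3_def by (simp add: wtr_out)
    qed
    thus ?thesis by simp
  qed
  have ST: "sum T U = (if bl then sum f3 U3 else 0)"
  proof -
    have "sum T U = sum (\<lambda>p. if bl then f3 p else 0) U3"
    proof -
      have "{p \<in> U. bl \<and> d < fst p \<and> snd p < e} = (if bl then U3 else {})"
        unfolding U_def U3_def tri_def by auto
      moreover have "sum T U = sum f3 {p \<in> U. bl \<and> d < fst p \<and> snd p < e}"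
        unfolding T_def by (simp add: sum.inter_filter[OF finU])
      ultimately show ?thesis by auto
    qed
    thus ?thesis by simp
  qed
  have C: "int (card (U - U1)) + int (card (U - U2)) - int (card (U - U3))
      = (if bl \<and> d < x \<and> y < e then 1 else 0)"
  proof -
    have "U - U3 = (U - U1) \<union> (U - U2)" using U3e by auto
    moreover have "(U - U1) \<inter> (U - U2) = U - (U1 \<union> U2)" by auto
    moreover have "card ((U - U1) \<union> (U - U2)) + card ((U - U1) \<inter> (U - U2)) = card (U - U1) + card (U - U2)"
      using card_Un_Int[of "U-U1" "U-U2"] finU by auto
    ultimately show ?thesis using Urest by (auto split: if_splits)
  qed
  have U3empty: "\<not> (d < x \<and> y < e) \<Longrightarrow> U3 = {}" unfolding U3_def tri_def by auto
  have w: "int (wtr B d e x y) = 1 + sum f U" unfolding f_def U_def by (subst wtr.simps) simp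
  have w1: "int (wtr B d (e-1) x y) = 1 + sum f1 U1" unfolding f1_def U1_def by (subst wtr.simps) simp
  have w2: "int (wtr B (d+1) e x y) = 1 + sum f2 U2" unfolding f2_def U2_def by (subst wtr.simps) simp
  have w3: "int (wtr B (d+1) (e-1) x y) = 1 + sum f3 U3" unfolding f3_def U3_def by (subst wtr.simps) simp
  have main: "sum f U = sum f1 U1 + sum f2 U2 - sum f3 U3
      + (if bl \<and> d < x \<and> y < e then 1 else 0) + (if bl then sum f3 U3 else 0)"
    using S S1 S2 S3 ST C by linarith
  show ?case
  proof (cases "bl \<and> d < x \<and> y < e")
    case True
    then show ?thesis using w w1 w2 w3 main unfolding bl_def by auto
  next
    case False
    hence "(if bl then sum f3 U3 else 0) = 0" using U3empty by auto
    then show ?thesis using w w1 w2 w3 main False unfolding bl_def by auto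
  qed
qed


definition Ext :: "(nat \<times> nat) set \<Rightarrow> nat \<Rightarrow> nat \<Rightarrow> (nat \<times> nat) set" where
  "Ext B d e = (B \<inter> tri d e) \<union> {(x, x+1) | x. d \<le> x \<and> x+1 \<le> e}"

definition vv :: "nat \<times> nat \<Rightarrow> nat \<Rightarrow> int" where
  "vv D j = zpow (fst D) 1 j + zpow (snd D) 1 j"

definition GG :: "(nat \<times> nat) set \<Rightarrow> nat \<Rightarrow> nat \<Rightarrow> nat \<Rightarrow> int" where
  "GG B d e j = (\<Sum>D \<in> Ext B d e. int (wtr B d e (fst D) (snd D)) * vv D j)"

definition HH :: "(nat \<times> nat) set \<Rightarrow> (nat \<Rightarrow> int) \<Rightarrow> nat \<Rightarrow> nat \<Rightarrow> nat \<Rightarrow> int" where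
  "HH B a d e j = (if d \<le> j \<and> j \<le> e then a j * int (wtr B d e j j) else 0)"

lemma finite_Ext[simp]: "finite (Ext B d e)"
proof -
  have "{(x, x+1) | x. d \<le> x \<and> x+1 \<le> e} \<subseteq> {0..e} \<times> {0..e}" by auto
  hence "finite {(x, x+1) | x. d \<le> x \<and> x+1 \<le> e}" by (rule finite_subset) auto
  thus ?thesis unfolding Ext_def by auto
qed

lemma GG_IE:
  assumes de: "d < e"
  shows "GG B d e j = GG B d (e-1) j + GG B (d+1) e j - GG B (d+1) (e-1) j
     + (if (d,e) \<in> B \<and> d+2 \<le> e then GG B (d+1) (e-1) j else 0)
     + (if (d,e) \<in> Ext B d e then vv (d,e) j else 0)"
proof -
  define bl where "bl = ((d,e) \<in> B \<and> d+2 \<le> e)"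
  define E where "E = Ext B d e"
  define E1 where "E1 = Ext B d (e-1)"
  define E2 where "E2 = Ext B (d+1) e"
  define E3 where "E3 = Ext B (d+1) (e-1)"
  define g1 where "g1 = (\<lambda>D. int (wtr B d (e-1) (fst D) (snd D)) * vv D j)"
  define g2 where "g2 = (\<lambda>D. int (wtr B (d+1) e (fst D) (snd D)) * vv D j)"
  define g3 where "g3 = (\<lambda>D. int (wtr B (d+1) (e-1) (fst D) (snd D)) * vv D j)"
  define t where "t = (\<lambda>D. if bl \<and> d < fst D \<and> snd D < e then g3 D else 0)"
  have finE: "finite E" unfolding E_def by simp
  have E1s: "E1 \<subseteq> E" unfolding E1_def E_def Ext_def tri_def by auto
  have E2s: "E2 \<subseteq> E" unfolding E2_def E_def Ext_def tri_def by auto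
  have E3e: "E3 = E1 \<inter> E2" unfolding E1_def E2_def E3_def Ext_def tri_def by auto
  have E3s: "E3 \<subseteq> E" using E3e E1s by auto
  have Erest: "E - (E1 \<union> E2) = (if (d,e) \<in> E then {(d,e)} else {})"
    unfolding E_def E1_def E2_def Ext_def tri_def using de
    by auto (metis Suc_le_D Suc_pred le_antisym not_less_eq_eq zero_less_Suc)
  have gs: "int (wtr B d e (fst D) (snd D)) * vv D j = g1 D + g2 D - g3 D + t D" for D
  proof -
    let ?W = "int (wtr B d (e-1) (fst D) (snd D)) + int (wtr B (d+1) e (fst D) (snd D))
     - int (wtr B (d+1) (e-1) (fst D) (snd D))
     + (if (d,e) \<in> B \<and> d+2 \<le> e \<and> d < fst D \<and> snd D < e then int (wtr B (d+1) (e-1) (fst D) (snd D)) else 0)"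
    have "int (wtr B d e (fst D) (snd D)) * vv D j = ?W * vv D j"
      using wtr_IE[OF de, of B "fst D" "snd D"] by simp
    also have "\<dots> = g1 D + g2 D - g3 D + t D"
      unfolding g1_def g2_def g3_def t_def bl_def by (simp add: algebra_simps)
    finally show ?thesis .
  qed
  have S: "GG B d e j = sum g1 E + sum g2 E - sum g3 E + sum t E"
    unfolding GG_def E_def[symmetric] gs by (simp add: sum.distrib sum_subtractf)
  have S1: "sum g1 E = sum g1 E1 + sum (\<lambda>D. vv D j) (E - E1)"
  proof (rule sum_split_const[OF finE E1s])
    fix p assume "p \<in> E - E1"
    hence "e - 1 \<le> snd p" unfolding E_def E1_def Ext_def tri_def by auto
    thus "g1 p = vv p j" unfolding g1_def by (simp add: wtr_out)
  qed
  have S2: "sum g2 E = sum g2 E2 + sum (\<lambda>D. vv D j) (E - E2)"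
  proof (rule sum_split_const[OF finE E2s])
    fix p assume "p \<in> E - E2"
    hence "fst p \<le> d + 1" unfolding E_def E2_def Ext_def tri_def by auto (metis nat_le_linear)+
    thus "g2 p = vv p j" unfolding g2_def by (simp add: wtr_out)
  qed
  have S3: "sum g3 E = sum g3 E3 + sum (\<lambda>D. vv D j) (E - E3)"
  proof (rule sum_split_const[OF finE E3s])
    fix p assume "p \<in> E - E3"
    hence "fst p \<le> d + 1 \<or> e - 1 \<le> snd p" unfolding E_def E3_def Ext_def tri_def by auto
    thus "g3 p = vv p j" unfolding g3_def by (simp add: wtr_out)
  qed
  have ST: "sum t E = (if bl then sum g3 E3 else 0)"
  proof -
    have "{p \<in> E. bl \<and> d < fst p \<and> snd p < e} = (if bl then E3 else {})"
      unfolding E_def E3_def Ext_def tri_def by auto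
    moreover have "sum t E = sum g3 {p \<in> E. bl \<and> d < fst p \<and> snd p < e}"
      unfolding t_def by (simp add: sum.inter_filter[OF finE])
    ultimately show ?thesis by auto
  qed
  have C: "sum (\<lambda>D. vv D j) (E - E1) + sum (\<lambda>D. vv D j) (E - E2) - sum (\<lambda>D. vv D j) (E - E3)
      = (if (d,e) \<in> E then vv (d,e) j else 0)"
  proof -
    have "E - E3 = (E - E1) \<union> (E - E2)" using E3e by auto
    moreover have "(E - E1) \<inter> (E - E2) = E - (E1 \<union> E2)" by auto
    moreover have "sum (\<lambda>D. vv D j) ((E - E1) \<union> (E - E2)) + sum (\<lambda>D. vv D j) ((E - E1) \<inter> (E - E2))
        = sum (\<lambda>D. vv D j) (E - E1) + sum (\<lambda>D. vv D j) (E - E2)"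
      by (rule sum.union_inter) (use finE in auto)
    ultimately show ?thesis using Erest by (auto split: if_splits)
  qed
  have G1: "GG B d (e-1) j = sum g1 E1" unfolding GG_def g1_def E1_def ..
  have G2: "GG B (d+1) e j = sum g2 E2" unfolding GG_def g2_def E2_def ..
  have G3: "GG B (d+1) (e-1) j = sum g3 E3" unfolding GG_def g3_def E3_def ..
  show ?thesis using S S1 S2 S3 ST C G1 G2 G3 unfolding bl_def[symmetric] E_def[symmetric]
    by (auto split: if_splits)
qed

lemma HH_IE:
  assumes de: "d < e"
  shows "HH B a d e j = HH B a d (e-1) j + HH B a (d+1) e j - HH B a (d+1) (e-1) j
     + (if (d,e) \<in> B \<and> d+2 \<le> e then HH B a (d+1) (e-1) j else 0)"
proof -
  have W: "int (wtr B d e j j) = int (wtr B d (e-1) j j) + int (wtr B (d+1) e j j)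
     - int (wtr B (d+1) (e-1) j j)
     + (if (d,e) \<in> B \<and> d+2 \<le> e \<and> d < j \<and> j < e then int (wtr B (d+1) (e-1) j j) else 0)"
    by (rule wtr_IE[OF de])
  consider "j < d" | "j = d" | "d < j \<and> j < e" | "j = e" | "e < j" by linarith
  then show ?thesis
  proof cases
    case 1 then show ?thesis unfolding HH_def by auto
  next
    case 2 then show ?thesis using W de unfolding HH_def by (auto simp: wtr_out)
  next
    case 3
    have "a j * int (wtr B d e j j) = a j * (int (wtr B d (e-1) j j) + int (wtr B (d+1) e j j)
     - int (wtr B (d+1) (e-1) j j)
     + (if (d,e) \<in> B \<and> d+2 \<le> e \<and> d < j \<and> j < e then int (wtr B (d+1) (e-1) j j) else 0))"
      using W by simp
    then show ?thesis using 3 de unfolding HH_def by (auto simp: algebra_simps)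
  next
    case 4 then show ?thesis using W de unfolding HH_def by (auto simp: wtr_out)
  next
    case 5 then show ?thesis unfolding HH_def by auto
  qed
qed


lemma Ext_empty: "e \<le> d \<Longrightarrow> Ext B d e = {}"
  unfolding Ext_def tri_def by auto

lemma FF_empty: "HH B a (d+1) d j = 0" "GG B (d+1) d j = 0"
  unfolding HH_def GG_def by (auto simp: Ext_empty)

lemma blk_iff: "d < e \<Longrightarrow> ((d,e) \<in> Ext B d e) = ((d,e) \<in> ext_black E B \<or> e = d+1)"
  unfolding Ext_def ext_black_def tri_def by auto

lemma pm_formula: "d \<le> e \<Longrightarrow> pm E B a d e j = HH B a d e j - GG B d e j"
proof (induction "e - d" arbitrary: d e j rule: less_induct)
  case less
  show ?case
  proof (cases "e = d")
    case True
    have "pm E B a d e j = zpow e (a e) j" using True by (subst pm.simps) simp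
    moreover have "GG B d e j = 0" unfolding GG_def using True by (simp add: Ext_empty)
    moreover have "HH B a d e j = zpow e (a e) j" unfolding HH_def zpow_def using True
      by (auto simp: wtr_out)
    ultimately show ?thesis by simp
  next
    case False
    hence de: "d < e" using less.prems by simp
    have IH1: "pm E B a d (e-1) j = HH B a d (e-1) j - GG B d (e-1) j"
      using less.hyps[of "e-1" d] de by simp
    have IH2: "pm E B a (d+1) e j = HH B a (d+1) e j - GG B (d+1) e j"
      using less.hyps[of e "d+1"] de by simp
    note H = HH_IE[OF de, of B a j] and G = GG_IE[OF de, of B j]
    show ?thesis
    proof (cases "(d,e) \<in> ext_black E B \<or> e = d+1")
      case True
      hence pmv: "pm E B a d e j = pm E B a d (e-1) j + pm E B a (d+1) e j - zpow d 1 j - zpow e 1 j"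
        using de by (subst pm.simps) simp
      have blk: "(d,e) \<in> Ext B d e" using blk_iff[OF de] True by blast
      show ?thesis
      proof (cases "(d,e) \<in> B \<and> d+2 \<le> e")
        case True
        then show ?thesis using pmv IH1 IH2 H G blk by (simp add: vv_def)
      next
        case False
        hence "e = d + 1" using blk unfolding Ext_def tri_def by auto
        hence "HH B a (d+1) (e-1) j = 0" "GG B (d+1) (e-1) j = 0" using FF_empty by auto
        then show ?thesis using pmv IH1 IH2 H G blk False by (simp add: vv_def)
      qed
    next
      case False
      hence pmv: "pm E B a d e j = pm E B a d (e-1) j + pm E B a (d+1) e j - pm E B a (d+1) (e-1) j"
        using de by (subst pm.simps) simp
      have nb: "(d,e) \<notin> Ext B d e" using blk_iff[OF de] False by blast
      have "e \<noteq> d + 1" using False by auto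
      hence IH3: "pm E B a (d+1) (e-1) j = HH B a (d+1) (e-1) j - GG B (d+1) (e-1) j"
        using less.hyps[of "e-1" "d+1"] de by simp
      have nbl: "\<not> ((d,e) \<in> B \<and> d+2 \<le> e)" using nb unfolding Ext_def tri_def by auto
      have H': "HH B a d e j = HH B a d (e-1) j + HH B a (d+1) e j - HH B a (d+1) (e-1) j"
        using H nbl by (simp only: if_False)
      have G': "GG B d e j = GG B d (e-1) j + GG B (d+1) e j - GG B (d+1) (e-1) j"
        using G nbl nb by (simp only: if_False)
      show ?thesis using pmv IH1 IH2 IH3 H' G' by linarith
    qed
  qed
qed


context
  fixes e :: nat and B :: "(nat \<times> nat) set"
  assumes sp: "sparse 2 (e - 1) B"
begin

lemma Bsub: "B \<subseteq> tri 2 (e-1)"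
  using sp unfolding sparse_def by blast

lemma sp_le: "(x,y) \<in> tri 2 (e-1) \<Longrightarrow> card (B \<inter> tri x y) \<le> y - x - 1"
  using sp unfolding sparse_def by blast

lemma sp_eq: "(x,y) \<in> tri 2 (e-1) \<Longrightarrow> (card (B \<inter> tri x y) = y - x - 1) = ((x,y) \<in> B)"
  using sp unfolding sparse_def by blast

lemma tri_empty: "y < x + 2 \<Longrightarrow> tri x y = {}"
  unfolding tri_def by auto

lemma cle: "2 \<le> x \<Longrightarrow> x < y \<Longrightarrow> y \<le> e - 1 \<Longrightarrow> card (B \<inter> tri x y) \<le> y - x - 1"
proof -
  assume h: "2 \<le> x" "x < y" "y \<le> e - 1"
  show ?thesis
  proof (cases "y = x + 1")
    case True then show ?thesis by (simp add: tri_empty)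
  next
    case False
    hence "(x,y) \<in> tri 2 (e-1)" using h unfolding tri_def by auto
    then show ?thesis by (rule sp_le)
  qed
qed

lemma EB_cases: "(x,y) \<in> ext_black e B \<Longrightarrow> (x,y) \<in> B \<or> (y = x + 1 \<and> 2 \<le> x \<and> y \<le> e - 1)"
  unfolding ext_black_def by auto

lemma EB_range: "(x,y) \<in> ext_black e B \<Longrightarrow> 2 \<le> x \<and> x < y \<and> y \<le> e - 1"
  using EB_cases Bsub unfolding tri_def by fastforce

lemma EB_base: "2 \<le> x \<Longrightarrow> x + 1 \<le> e - 1 \<Longrightarrow> (x, x+1) \<in> ext_black e B"
  unfolding ext_black_def by auto

lemma Feq: "(x,y) \<in> ext_black e B \<Longrightarrow> card (B \<inter> tri x y) = y - x - 1"
proof -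
  assume h: "(x,y) \<in> ext_black e B"
  show ?thesis
  proof (cases "(x,y) \<in> B")
    case True
    hence "(x,y) \<in> tri 2 (e-1)" using Bsub by auto
    then show ?thesis using sp_eq True by blast
  next
    case False
    hence "y = x + 1" using EB_cases[OF h] by auto
    then show ?thesis by (simp add: tri_empty)
  qed
qed

lemma noncross:
  assumes ab: "(a,b) \<in> ext_black e B" and cd: "(c,d) \<in> ext_black e B"
    and o: "a < c" "c < b" "b < d"
  shows False
proof -
  have ra: "2 \<le> a" using EB_range[OF ab] by auto
  have rd: "d \<le> e - 1" using EB_range[OF cd] by auto
  have adtri: "(a,d) \<in> tri 2 (e-1)" using ra rd o unfolding tri_def by auto
  define X where "X = (B \<inter> tri a b) \<union> (B \<inter> tri c d)"
  have Xs: "X \<subseteq> B \<inter> tri a d" unfolding X_def tri_def using o by auto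
  have int: "(B \<inter> tri a b) \<inter> (B \<inter> tri c d) = B \<inter> tri c b" unfolding tri_def using o by auto
  have cX: "card X + card (B \<inter> tri c b) = card (B \<inter> tri a b) + card (B \<inter> tri c d)"
    unfolding X_def using card_Un_Int[of "B \<inter> tri a b" "B \<inter> tri c d"] int
    by (simp add: finite_subset[OF _ finite_tri])
  have c1: "card (B \<inter> tri a b) = b - a - 1" by (rule Feq[OF ab])
  have c2: "card (B \<inter> tri c d) = d - c - 1" by (rule Feq[OF cd])
  have c3: "card (B \<inter> tri c b) \<le> b - c - 1" using cle[of c b] ra o rd by auto
  have cXg: "card X \<ge> d - a - 1" using cX c1 c2 c3 o by linarith
  have fin: "finite (B \<inter> tri a d)" by (simp add: finite_subset[OF _ finite_tri])
  have le: "card (B \<inter> tri a d) \<le> d - a - 1" by (rule sp_le[OF adtri])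
  show False
  proof (cases "(a,d) \<in> B")
    case True
    have "insert (a,d) X \<subseteq> B \<inter> tri a d" using Xs True adtri unfolding tri_def by auto
    hence "card (insert (a,d) X) \<le> card (B \<inter> tri a d)" by (rule card_mono[OF fin])
    moreover have "(a,d) \<notin> X" unfolding X_def tri_def using o by auto
    moreover have "finite X" using Xs fin finite_subset by blast
    ultimately show False using cXg le by simp
  next
    case False
    have "card X \<le> card (B \<inter> tri a d)" by (rule card_mono[OF fin Xs])
    hence "card (B \<inter> tri a d) = d - a - 1" using cXg le by linarith
    then show False using sp_eq[OF adtri] False by blast
  qed
qed

lemma apex:
  assumes uv: "(u,v) \<in> B"
  shows "\<exists>i. u < i \<and> i < v \<and> (u,i) \<in> ext_black e B \<and> (i,v) \<in> ext_black e B"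
proof -
  have uvt: "2 \<le> u" "u + 2 \<le> v" "v \<le> e - 1" using uv Bsub unfolding tri_def by auto
  define P where "P = (\<lambda>i. u < i \<and> (i,v) \<in> ext_black e B)"
  have Pv: "P (v - 1)" unfolding P_def using EB_base[of "v-1"] uvt by auto
  define i where "i = (LEAST i. P i)"
  have Pi: "P i" unfolding i_def using Pv by (rule LeastI)
  have iv: "i \<le> v - 1" unfolding i_def using Pv by (rule Least_le)
  have minim: "\<And>k. k < i \<Longrightarrow> \<not> P k" unfolding i_def by (rule not_less_Least)
  have ui: "u < i" and ivB: "(i,v) \<in> ext_black e B" using Pi unfolding P_def by auto
  have sub: "B \<inter> tri u v \<subseteq> insert (u,v) ((B \<inter> tri u i) \<union> (B \<inter> tri i v))"
  proof
    fix p assume p: "p \<in> B \<inter> tri u v"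
    obtain p1 p2 where pp: "p = (p1,p2)" by (cases p)
    have pt: "u \<le> p1" "p2 \<le> v" "p1 + 2 \<le> p2" "(p1,p2) \<in> B" using p pp unfolding tri_def by auto
    show "p \<in> insert (u,v) ((B \<inter> tri u i) \<union> (B \<inter> tri i v))"
    proof (rule ccontr)
      assume nin: "p \<notin> insert (u,v) ((B \<inter> tri u i) \<union> (B \<inter> tri i v))"
      have a1: "i < p2" using nin pt pp unfolding tri_def by auto
      have a2: "p1 < i" using nin pt pp unfolding tri_def by auto
      show False
      proof (cases "p2 = v")
        case True
        hence "p1 \<noteq> u" using nin pp by auto
        hence "P p1" unfolding P_def using pt True unfolding ext_black_def by auto
        then show False using minim a2 by blast
      next
        case False
        hence "p2 < v" using pt by auto
        moreover have "(p1,p2) \<in> ext_black e B" using pt unfolding ext_black_def by auto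
        ultimately show False using noncross[of p1 p2 i v] ivB a1 a2 by blast
      qed
    qed
  qed
  have fin: "finite (B \<inter> tri u i \<union> B \<inter> tri i v)" by (simp add: finite_subset[OF _ finite_tri])
  have "card (B \<inter> tri u v) \<le> card (insert (u,v) ((B \<inter> tri u i) \<union> (B \<inter> tri i v)))"
    by (rule card_mono[OF _ sub]) (use fin in simp)
  also have "\<dots> \<le> Suc (card ((B \<inter> tri u i) \<union> (B \<inter> tri i v)))" using fin by (simp add: card_insert_if)
  also have "\<dots> \<le> Suc (card (B \<inter> tri u i) + card (B \<inter> tri i v))" using card_Un_le by simp
  finally have cc: "card (B \<inter> tri u v) \<le> Suc (card (B \<inter> tri u i) + card (B \<inter> tri i v))" .
  have "card (B \<inter> tri u v) = v - u - 1" using Feq uv unfolding ext_black_def by auto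
  moreover have "card (B \<inter> tri i v) = v - i - 1" by (rule Feq[OF ivB])
  ultimately have ge: "card (B \<inter> tri u i) \<ge> i - u - 1" using cc ui iv uvt by linarith
  have "(u,i) \<in> ext_black e B"
  proof (cases "i = u + 1")
    case True then show ?thesis using EB_base[of u] uvt iv by auto
  next
    case False
    hence ut: "(u,i) \<in> tri 2 (e-1)" using ui uvt iv unfolding tri_def by auto
    hence "card (B \<inter> tri u i) = i - u - 1" using ge sp_le by (simp add: le_antisym)
    hence "(u,i) \<in> B" using sp_eq[OF ut] by blast
    then show ?thesis unfolding ext_black_def by auto
  qed
  then show ?thesis using ui iv uvt ivB by (intro exI[of _ i]) auto
qed


lemma finite_EB: "finite (ext_black e B)"
proof -
  have "ext_black e B \<subseteq> tri 2 (e-1) \<union> {0..e} \<times> {0..e}"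
    using Bsub unfolding ext_black_def by auto
  thus ?thesis by (rule finite_subset) auto
qed

lemma wt_eq: "wt e B x y = 1 + (\<Sum>p \<in> {p \<in> B \<inter> tri 2 (e - 1). fst p < x \<and> snd p > y}. wt e B (fst p) (snd p))"
  by (subst wt.simps) simp

lemma claim2:
  assumes j: "2 \<le> j" "j \<le> e - 1"
  shows "(\<Sum>D \<in> {p \<in> ext_black e B. fst p = j \<or> snd p = j}. wt e B (fst D) (snd D))
         = kk e B j * alph e B j"
proof -
  define L where "L = {p \<in> ext_black e B. fst p = j \<or> snd p = j}"
  define S where "S = {p \<in> B \<inter> tri 2 (e - 1). fst p < j \<and> j < snd p}"
  define W where "W = (\<lambda>D. wt e B (fst D) (snd D))"
  have finL: "finite L" unfolding L_def using finite_EB by auto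
  have finS: "finite S" unfolding S_def by (simp add: finite_subset[OF _ finite_tri])
  have al: "alph e B j = 1 + sum W S" unfolding alph_def S_def W_def by simp
  have nl: "nline e B j = card L" unfolding nline_def L_def ..
  show ?thesis
  proof (cases "S = {}")
    case True
    have "W D = 1" if D: "D \<in> L" for D
    proof -
      obtain x y where xy: "D = (x,y)" by (cases D)
      have r: "x < y" using EB_range D xy unfolding L_def by auto
      have "{p \<in> B \<inter> tri 2 (e - 1). fst p < x \<and> snd p > y} \<subseteq> S"
        using D xy r unfolding L_def S_def by auto
      hence E0: "{p \<in> B \<inter> tri 2 (e - 1). fst p < x \<and> snd p > y} = {}" using True by auto
      show ?thesis unfolding W_def xy fst_conv snd_conv by (subst wt.simps, subst E0) simp
    qed
    hence "sum W L = card L" by simp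
    moreover have "alph e B j = 1" using al True by simp
    ultimately show ?thesis unfolding kk_def nl L_def[symmetric] W_def by simp
  next
    case False
    have Wpos: "W p \<ge> 1" for p unfolding W_def by (subst wt.simps) simp
    obtain q where qS: "q \<in> S" using False by auto
    have "W q \<le> sum W S" by (rule member_le_sum[OF qS]) (simp_all add: finS)
    hence "sum W S > 0" using Wpos[of q] by linarith
    hence al1: "alph e B j \<noteq> 1" using al by simp
    define f where "f = (\<lambda>q::nat\<times>nat. snd q - fst q)"
    obtain p where pS: "p \<in> S" and pmin: "\<And>q. q \<in> S \<Longrightarrow> f p \<le> f q"
    proof -
      have "Min (f ` S) \<in> f ` S" using finS False by simp
      then obtain p where "p \<in> S" "f p = Min (f ` S)" by auto
      moreover have "\<And>q. q \<in> S \<Longrightarrow> Min (f ` S) \<le> f q" using finS by simp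
      ultimately show ?thesis using that by metis
    qed
    obtain u v where p: "p = (u,v)" by (cases p)
    have uv: "(u,v) \<in> B" "u < j" "j < v" "2 \<le> u" "v \<le> e - 1" "u + 2 \<le> v"
      using pS p unfolding S_def tri_def by auto
    have uvE: "(u,v) \<in> ext_black e B" using uv unfolding ext_black_def by auto
    have minw: "\<And>x y. (x,y) \<in> S \<Longrightarrow> v - u \<le> y - x" using pmin p unfolding f_def by fastforce
    have inS: "(x,y) \<in> S" if "(x,y) \<in> B" "x < j" "j < y" for x y
      using that Bsub unfolding S_def by auto
    obtain i where i: "u < i" "i < v" "(u,i) \<in> ext_black e B" "(i,v) \<in> ext_black e B"
      using apex[OF uv(1)] by blast
    have ij: "i = j"
    proof (rule ccontr)
      assume "i \<noteq> j"
      then consider "j < i" | "i < j" by linarith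
      then show False
      proof cases
        case 1
        hence "(u,i) \<in> B" using EB_cases[OF i(3)] uv by auto
        hence "(u,i) \<in> S" using inS uv 1 by auto
        then show False using minw[of u i] i by auto
      next
        case 2
        hence "(i,v) \<in> B" using EB_cases[OF i(4)] uv by auto
        hence "(i,v) \<in> S" using inS uv 2 by auto
        then show False using minw[of i v] i by auto
      qed
    qed
    have ujE: "(u,j) \<in> ext_black e B" and jvE: "(j,v) \<in> ext_black e B" using i ij by auto
    have cont: "fst q \<le> u \<and> v \<le> snd q" if q: "q \<in> S" for q
    proof -
      obtain x y where xy: "q = (x,y)" by (cases q)
      have qq: "(x,y) \<in> B" "x < j" "j < y" using q xy unfolding S_def by auto
      have qE: "(x,y) \<in> ext_black e B" using qq unfolding ext_black_def by auto
      have mw: "v - u \<le> y - x" using minw q xy by auto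
      have "x \<le> u"
      proof (rule ccontr)
        assume "\<not> x \<le> u"
        hence "u < x" by simp
        show False
        proof (cases "v < y")
          case True
          then show False using noncross[OF uvE qE] \<open>u < x\<close> qq uv by auto
        next
          case False
          then show False using mw \<open>u < x\<close> qq uv by auto
        qed
      qed
      moreover have "v \<le> y"
      proof (rule ccontr)
        assume "\<not> v \<le> y"
        hence "y < v" by simp
        show False
        proof (cases "x < u")
          case True
          then show False using noncross[OF qE uvE] \<open>y < v\<close> qq uv by auto
        next
          case False
          then show False using mw \<open>y < v\<close> \<open>x \<le> u\<close> qq uv by auto
        qed
      qed
      ultimately show ?thesis using xy by simp
    qed
    have SW: "1 + sum W S = W (u,j) + W (j,v)"
    proof -
      define P1 where "P1 = {p \<in> B \<inter> tri 2 (e - 1). fst p < u \<and> snd p > j}"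
      define P2 where "P2 = {p \<in> B \<inter> tri 2 (e - 1). fst p < j \<and> snd p > v}"
      define P12 where "P12 = {p \<in> B \<inter> tri 2 (e - 1). fst p < u \<and> snd p > v}"
      have w1: "W (u,j) = 1 + sum W P1" unfolding W_def P1_def by (subst wt.simps) simp
      have w2: "W (j,v) = 1 + sum W P2" unfolding W_def P2_def by (subst wt.simps) simp
      have w12: "W (u,v) = 1 + sum W P12" unfolding W_def P12_def by (subst wt.simps) simp
      have U: "P1 \<union> P2 = S - {(u,v)}"
      proof
        show "P1 \<union> P2 \<subseteq> S - {(u,v)}" unfolding P1_def P2_def S_def using uv by auto
        show "S - {(u,v)} \<subseteq> P1 \<union> P2"
        proof
          fix q assume q: "q \<in> S - {(u,v)}"
          hence "fst q \<le> u" "v \<le> snd q" using cont by auto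
          moreover have "q \<noteq> (u,v)" using q by auto
          ultimately have "fst q < u \<or> v < snd q" by (cases q) auto
          then show "q \<in> P1 \<union> P2" using q uv unfolding P1_def P2_def S_def by auto
        qed
      qed
      have I: "P1 \<inter> P2 = P12" unfolding P1_def P2_def P12_def using uv by auto
      have finP: "finite P1" "finite P2" unfolding P1_def P2_def
        by (simp_all add: finite_subset[OF _ finite_tri])
      have "sum W P1 + sum W P2 = sum W (P1 \<union> P2) + sum W (P1 \<inter> P2)"
        using sum.union_inter[OF finP, of W] by simp
      also have "\<dots> = sum W (S - {(u,v)}) + sum W P12" using U I by simp
      finally have "sum W P1 + sum W P2 = sum W (S - {(u,v)}) + sum W P12" .
      moreover have "sum W S = W (u,v) + sum W (S - {(u,v)})"
        using sum.remove[OF finS, of "(u,v)" W] pS p by simp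
      ultimately show ?thesis using w1 w2 w12 by simp
    qed
    define L' where "L' = L - {(u,j),(j,v)}"
    have ujL: "(u,j) \<in> L" and jvL: "(j,v) \<in> L" using ujE jvE unfolding L_def by auto
    have neq: "(u,j) \<noteq> (j,v)" using uv by auto
    have Ldec: "L = insert (u,j) (insert (j,v) L')" using ujL jvL unfolding L'_def by auto
    have finL': "finite L'" using finL unfolding L'_def by auto
    have nin: "(u,j) \<notin> insert (j,v) L'" "(j,v) \<notin> L'" using neq unfolding L'_def by auto
    have cardL: "card L = Suc (Suc (card L'))"
      unfolding Ldec using finL' nin by (simp add: card_insert_if)
    have WL': "W D = 1 + sum W S" if D: "D \<in> L'" for D
    proof -
      obtain x y where xy: "D = (x,y)" by (cases D)
      have DE: "(x,y) \<in> ext_black e B" and on: "x = j \<or> y = j" and nd: "D \<noteq> (u,j)" "D \<noteq> (j,v)"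
        using D xy unfolding L'_def L_def by auto
      have r: "x < y" using EB_range[OF DE] by auto
      have "{p \<in> B \<inter> tri 2 (e - 1). fst p < x \<and> snd p > y} = S"
      proof (cases "y = j")
        case True
        have "\<not> x < u" using noncross[OF DE uvE] True r uv by auto
        hence ux: "u < x" using nd xy True by (cases "x = u") auto
        show ?thesis
        proof
          show "{p \<in> B \<inter> tri 2 (e - 1). fst p < x \<and> snd p > y} \<subseteq> S"
            unfolding S_def using True r by auto
          show "S \<subseteq> {p \<in> B \<inter> tri 2 (e - 1). fst p < x \<and> snd p > y}"
            using cont ux True unfolding S_def by fastforce
        qed
      next
        case False
        hence xj: "x = j" using on by simp
        have "\<not> v < y" using noncross[OF uvE DE] xj r uv by auto
        hence yv: "y < v" using nd xy xj by (cases "y = v") auto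
        show ?thesis
        proof
          show "{p \<in> B \<inter> tri 2 (e - 1). fst p < x \<and> snd p > y} \<subseteq> S"
            unfolding S_def using xj r by auto
          show "S \<subseteq> {p \<in> B \<inter> tri 2 (e - 1). fst p < x \<and> snd p > y}"
            using cont yv xj unfolding S_def by fastforce
        qed
      qed
      thus ?thesis unfolding W_def xy by (subst wt.simps) (simp add: W_def)
    qed
    have "sum W L = W (u,j) + (W (j,v) + sum W L')"
      unfolding Ldec using finL' nin by simp
    also have "\<dots> = (1 + sum W S) + card L' * (1 + sum W S)" using SW WL' by simp
    finally have "sum W L = (card L - 1) * alph e B j" using cardL al by simp
    then show ?thesis unfolding kk_def using al1 nl unfolding L_def W_def by simp
  qed
qed

end


lemma wtr_wt: "wtr B 2 (e-1) x y = wt e B x y"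
proof (induction x arbitrary: y rule: less_induct)
  case (less x)
  have "wtr B 2 (e-1) x y = 1 + (\<Sum>p \<in> {p \<in> B \<inter> tri 2 (e-1). fst p < x \<and> snd p > y}. wtr B 2 (e-1) (fst p) (snd p))"
    by (subst wtr.simps) simp
  also have "\<dots> = 1 + (\<Sum>p \<in> {p \<in> B \<inter> tri 2 (e-1). fst p < x \<and> snd p > y}. wt e B (fst p) (snd p))"
    using less.IH by (intro arg_cong[where f="\<lambda>t. 1 + t"] sum.cong) auto
  also have "\<dots> = wt e B x y" by (subst (2) wt.simps) simp
  finally show ?case .
qed

theorem mainTheorem4:
  fixes e :: nat and a :: "nat \<Rightarrow> int" and B :: "(nat \<times> nat) set"
  assumes "4 \<le> e"
    and "sparse 2 (e - 1) B"
  shows "pm e B a 2 (e - 1) =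
    (\<lambda>\<beta>. if 2 \<le> \<beta> \<and> \<beta> \<le> e - 1
          then (a \<beta> - int (kk e B \<beta>)) * int (alph e B \<beta>) else 0)"
proof (rule ext)
  fix j
  note sp = assms(2)
  have pmj: "pm e B a 2 (e-1) j = HH B a 2 (e-1) j - GG B 2 (e-1) j"
    by (rule pm_formula) (use assms(1) in simp)
  have Bs: "B \<subseteq> tri 2 (e-1)" by (rule Bsub[OF sp])
  have ExtEq: "Ext B 2 (e-1) = ext_black e B"
  proof
    show "Ext B 2 (e-1) \<subseteq> ext_black e B"
      unfolding Ext_def ext_black_def by auto
    show "ext_black e B \<subseteq> Ext B 2 (e-1)"
      unfolding Ext_def ext_black_def using Bs by auto
  qed
  define L where "L = {p \<in> ext_black e B. fst p = j \<or> snd p = j}"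
  have GGj: "GG B 2 (e-1) j = int (\<Sum>D \<in> L. wt e B (fst D) (snd D))"
  proof -
    have "GG B 2 (e-1) j = (\<Sum>D \<in> ext_black e B. int (wt e B (fst D) (snd D)) * vv D j)"
      unfolding GG_def ExtEq wtr_wt ..
    also have "\<dots> = (\<Sum>D \<in> ext_black e B. if fst D = j \<or> snd D = j then int (wt e B (fst D) (snd D)) else 0)"
    proof (rule sum.cong[OF refl])
      fix D assume D: "D \<in> ext_black e B"
      have "fst D < snd D" using EB_range[OF sp, of "fst D" "snd D"] D by simp
      then show "int (wt e B (fst D) (snd D)) * vv D j = (if fst D = j \<or> snd D = j then int (wt e B (fst D) (snd D)) else 0)"
        unfolding vv_def zpow_def by auto
    qed
    also have "\<dots> = (\<Sum>D \<in> L. int (wt e B (fst D) (snd D)))"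
      unfolding L_def by (rule sum.inter_filter[symmetric]) (rule finite_EB[OF sp])
    finally show ?thesis by simp
  qed
  have alw: "int (wtr B 2 (e-1) j j) = int (alph e B j)"
    unfolding alph_def by (subst wtr.simps) (simp add: wtr_wt[simplified])
  show "pm e B a 2 (e - 1) j = (if 2 \<le> j \<and> j \<le> e - 1
          then (a j - int (kk e B j)) * int (alph e B j) else 0)"
  proof (cases "2 \<le> j \<and> j \<le> e - 1")
    case True
    have c2: "(\<Sum>D \<in> L. wt e B (fst D) (snd D)) = kk e B j * alph e B j"
      unfolding L_def using claim2[OF sp] True by blast
    show ?thesis using pmj GGj c2 True alw unfolding HH_def by (simp add: algebra_simps)
  next
    case False
    have "L = {}" unfolding L_def using EB_range[OF sp] False by fastforce
    moreover have "HH B a 2 (e-1) j = 0" unfolding HH_def using False by auto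
    ultimately show ?thesis using pmj GGj False by auto
  qed
qed

end
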